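(* Let $F$ be the elementary cellular automaton with rule number 156. For every nonempty finite word $u\in\{0,1\}^*$, the deterministic communication complexity of $\textsc{SInv}_{F,u}$ restricted to inputs of length $n$ is bounded by a constant independent of $n$.
   Context: An elementary cellular automaton (ECA) with rule number $N\in\{0,\dots,255\}$ is the map $F:\{0,1\}^{\mathbb Z}\to\{0,1\}^{\mathbb Z}$ given by $F(x)_i=f(x_{i-1},x_i,x_{i+1})$. Here the local rule $f:\{0,1\}^3\to\{0,1\}$ is determined by $N=\sum_{a,b,c\in\{0,1\}}2^{4a+2b+c}f(a,b,c)$. For a nonempty finite word $u$, $p_u\in\{0,1\}^{\mathbb Z}$ is defined by $(p_u)_i=u_{i\bmod |u|}$. For a finite word $x$, $p_u[x]$ is the configuration equal to $x$ on positions $0,\dots,|x|-1$ and to $p_u$ elsewhere. $\textsc{SInv}_{F,u}$ is the decision problem: on input a finite word $x$, decide whether there is an integer $w$ such that for all $t\ge0$ the set of positions where $F^t(p_u)$ and $F^t(p_u[x])$ differ is contained in an interval of length $w$. For each $n$, it is regarded as a function $\{0,1\}^n\to\{0,1\}$. For a function $g:X\times Y\to Z$, $D(g)$ is the minimal depth of a deterministic two-party protocol computing $g$. In such a protocol, Alice knows $x$ and Bob knows $y$. The protocol is a binary tree: each internal node is labelled by a function of Alice's input only or of Bob's input only, with values in $\{\text{left},\text{right}\}$, and each leaf is labelled by an output value. For $g:\{0,1\}^m\to Z$, set $D(g)=\max_{0\le i<m}D(g_i)$, where $g_i:\{0,1\}^i\times\{0,1\}^{m-i}\to Z$ is $g_i(x,y)=g(xy)$.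 *)

theory Defs
  imports Main
begin

(* Configurations of {0,1}^Z are functions int => bool (True = 1); words are bool lists. *)
type_synonym config = "int \<Rightarrow> bool"

definition b2n :: "bool \<Rightarrow> nat" where "b2n b = (if b then 1 else 0)"

definition local_rule :: "nat \<Rightarrow> bool \<Rightarrow> bool \<Rightarrow> bool \<Rightarrow> bool" where
  "local_rule N a b c = bit N (4 * b2n a + 2 * b2n b + b2n c)"

definition eca :: "nat \<Rightarrow> config \<Rightarrow> config" where
  "eca N x = (\<lambda>i. local_rule N (x (i - 1)) (x i) (x (i + 1)))"

definition periodic :: "bool list \<Rightarrow> config" where
  "periodic u = (\<lambda>i. u ! nat (i mod int (length u)))"

definition patch :: "bool list \<Rightarrow> bool list \<Rightarrow> config" where
  "patch u x = (\<lambda>i. if 0 \<le> i \<and> i < int (length x) then x ! nat i else periodic u i)"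

definition diff_set :: "config \<Rightarrow> config \<Rightarrow> int set" where
  "diff_set c d = {i. c i \<noteq> d i}"

definition SInv :: "nat \<Rightarrow> bool list \<Rightarrow> bool list \<Rightarrow> bool" where
  "SInv N u x = (\<exists>w::int. \<forall>t::nat. \<exists>a::int.
      diff_set ((eca N ^^ t) (periodic u)) ((eca N ^^ t) (patch u x)) \<subseteq> {a..<a + w})"

(* deterministic two-party protocol trees; False = left, True = right *)
datatype ('a, 'b, 'z) protocol =
    Leaf 'z
  | AliceNode "'a \<Rightarrow> bool" "('a, 'b, 'z) protocol" "('a, 'b, 'z) protocol"
  | BobNode "'b \<Rightarrow> bool" "('a, 'b, 'z) protocol" "('a, 'b, 'z) protocol"

fun run :: "('a, 'b, 'z) protocol \<Rightarrow> 'a \<Rightarrow> 'b \<Rightarrow> 'z" where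
  "run (Leaf z) x y = z"
| "run (AliceNode f l r) x y = (if f x then run r x y else run l x y)"
| "run (BobNode f l r) x y = (if f y then run r x y else run l x y)"

fun depth :: "('a, 'b, 'z) protocol \<Rightarrow> nat" where
  "depth (Leaf z) = 0"
| "depth (AliceNode f l r) = Suc (max (depth l) (depth r))"
| "depth (BobNode f l r) = Suc (max (depth l) (depth r))"

definition D_split :: "nat \<Rightarrow> nat \<Rightarrow> (bool list \<Rightarrow> 'z) \<Rightarrow> nat" where
  "D_split i m g = (LEAST d. \<exists>P :: (bool list, bool list, 'z) protocol. depth P = d \<and>
      (\<forall>x y. length x = i \<longrightarrow> length y = m - i \<longrightarrow> run P x y = g (x @ y)))"

(* D(g) = max_{0 <= i < m} D(g_i)   (0 when m = 0) *)
definition D_word :: "nat \<Rightarrow> (bool list \<Rightarrow> 'z) \<Rightarrow> nat" where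
  "D_word m g = Sup ((\<lambda>i. D_split i m g) ` {..<m})"

end

theory Submission
  imports Defs
begin

lemma F156: "eca 156 c i = (c i \<noteq> (c (i-1) \<and> \<not> c (i+1)))"
  unfolding eca_def local_rule_def b2n_def
  by (cases "c (i-1)"; cases "c i"; cases "c (i+1)"; simp add: bit_nat_def)

lemma funpow_Suc_app: "(f ^^ Suc t) c = f ((f ^^ t) c)"
  by simp

lemma cc2:
  fixes A B :: "bool list \<Rightarrow> bool" and h :: "bool \<Rightarrow> bool \<Rightarrow> 'z" and g :: "bool list \<Rightarrow> 'z"
  assumes "\<forall>x y. g (x @ y) = h (A x) (B y)"
  shows "D_word n g \<le> (2::nat)"
proof -
  define P where "P = AliceNode A (BobNode B (Leaf (h False False)) (Leaf (h False True)))
                         (BobNode B (Leaf (h True False)) (Leaf (h True True)))"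
  have dP: "depth P = 2" unfolding P_def by simp
  have rP: "\<And>x y. run P x y = g (x @ y)" unfolding P_def using assms by simp
  have "\<And>i. D_split i n g \<le> 2"
    unfolding D_split_def by (rule Least_le) (use dP rP in blast)
  then show ?thesis unfolding D_word_def
    by (cases "n = 0") (auto intro!: cSup_least)
qed

lemma ivt:
  fixes p :: "int \<Rightarrow> bool"
  shows "\<not> p a \<Longrightarrow> p b \<Longrightarrow> a < b \<Longrightarrow> \<exists>j. a \<le> j \<and> j < b \<and> \<not> p j \<and> p (j+1)"
proof (induction "nat (b - a)" arbitrary: a rule: less_induct)
  case less
  show ?case
  proof (cases "p (a+1)")
    case True then show ?thesis using less.prems by auto
  next
    case False
    have "a + 1 \<noteq> b" using less.prems False by auto
    then have ab: "a + 1 < b" using less.prems by linarith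
    have "nat (b - (a+1)) < nat (b - a)" using ab by linarith
    from less.hyps[OF this False less.prems(2) ab] obtain j where
      "a+1 \<le> j \<and> j < b \<and> \<not> p j \<and> p (j+1)" by blast
    then show ?thesis by (intro exI[of _ j]) simp
  qed
qed

lemma seg_step:
  assumes "\<forall>i. (i \<le> j1+1 \<or> i \<ge> j2) \<longrightarrow> c i = d i" "\<not>c j1" "c (j1+1)" "\<not>c j2" "c(j2+1)"
  shows "(\<forall>i. (i \<le> j1+1 \<or> i \<ge> j2) \<longrightarrow> eca 156 c i = eca 156 d i) \<and> \<not>eca 156 c j1 \<and>
    eca 156 c (j1+1) \<and> \<not>eca 156 c j2 \<and> eca 156 c (j2+1)"
proof (intro conjI allI impI)
  fix i assume h: "i \<le> j1+1 \<or> i \<ge> j2"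
  consider "i \<le> j1 - 1" | "i = j1" | "i = j1+1" | "i = j2" | "i = j2+1" | "i \<ge> j2 + 2"
    using h by linarith
  then show "eca 156 c i = eca 156 d i"
  proof cases
    case 1 then show ?thesis using assms(1) by (simp add: F156)
  next
    case 2 then show ?thesis using assms by (simp add: F156)
  next
    case 3 then show ?thesis using assms by (simp add: F156)
  next
    case 4 then show ?thesis using assms by (simp add: F156)
  next
    case 5 then show ?thesis using assms by (simp add: F156)
  next
    case 6 then show ?thesis using assms(1) by (simp add: F156)
  qed
qed (use assms in \<open>simp_all add: F156\<close>)

lemma periodic_shift: "u \<noteq> [] \<Longrightarrow> periodic u (i + int (length u) * q) = periodic u i"
  unfolding periodic_def by simp

lemma periodic_nth: "k < length u \<Longrightarrow> periodic u (int k) = u ! k"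
  unfolding periodic_def by simp

lemma periodic_in_set: "u \<noteq> [] \<Longrightarrow> periodic u i \<in> set u"
  unfolding periodic_def
  by (rule nth_mem) (simp add: nat_less_iff)

lemma mixed:
  assumes "u \<noteq> []" "True \<in> set u" "False \<in> set u"
  shows "SInv 156 u x"
proof -
  let ?n = "int (length u)"
  let ?p = "periodic u"
  obtain i0 where i0: "i0 < length u" "u ! i0 = False" using assms(3) by (metis in_set_conv_nth)
  obtain i1 where i1: "i1 < length u" "u ! i1 = True" using assms(2) by (metis in_set_conv_nth)
  have "\<not> ?p (int i0)" using i0 periodic_nth by simp
  moreover have "?p (int i1 + ?n)" using periodic_shift[OF assms(1), of "int i1" 1] i1 periodic_nth by simp
  ultimately obtain j where j: "\<not> ?p j" "?p (j+1)"
    using ivt[of ?p "int i0" "int i1 + ?n"] i0 by auto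
  have n1: "?n \<ge> 1" using assms(1) by (simp add: Suc_leI)
  define j1 where "j1 = j + ?n * (- (\<bar>j\<bar> + 2))"
  define j2 where "j2 = j + ?n * (\<bar>j\<bar> + int (length x))"
  have "?n * (\<bar>j\<bar> + 2) \<ge> (\<bar>j\<bar> + 2)" using n1 mult_right_mono[of 1 ?n "\<bar>j\<bar> + 2"] by simp
  moreover have "j1 = j - ?n * (\<bar>j\<bar> + 2)" unfolding j1_def by (simp add: algebra_simps)
  ultimately have j1le: "j1 \<le> -2" using abs_ge_self[of j] by linarith
  have "?n * (\<bar>j\<bar> + int (length x)) \<ge> (\<bar>j\<bar> + int (length x))" using n1 mult_right_mono[of 1 ?n "\<bar>j\<bar> + int (length x)"] by simp
  then have j2ge: "j2 \<ge> int (length x)" unfolding j2_def using abs_ge_minus_self[of j] by linarith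
  have s1: "periodic u (j + ?n * q) = periodic u j" "periodic u (j + 1 + ?n * q) = periodic u (j+1)" for q
    using periodic_shift[OF assms(1), of j q] periodic_shift[OF assms(1), of "j+1" q] by auto
  have e1: "\<not> ?p j1" "?p (j1+1)" "\<not> ?p j2" "?p (j2+1)"
  proof -
    show "\<not> ?p j1" unfolding j1_def using s1(1) j by simp
    have "j1 + 1 = j + 1 + ?n * (- (\<bar>j\<bar> + 2))" unfolding j1_def by simp
    then show "?p (j1+1)" using s1(2)[of "- (\<bar>j\<bar> + 2)"] j by metis
    show "\<not> ?p j2" unfolding j2_def using s1(1) j by simp
    have "j2 + 1 = j + 1 + ?n * (\<bar>j\<bar> + int (length x))" unfolding j2_def by simp
    then show "?p (j2+1)" using s1(2)[of "\<bar>j\<bar> + int (length x)"] j by metis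
  qed
  have agree: "\<forall>i. (i \<le> j1+1 \<or> i \<ge> j2) \<longrightarrow> ?p i = patch u x i"
    using j1le j2ge unfolding patch_def by auto
  have inv: "(\<forall>i. (i \<le> j1+1 \<or> i \<ge> j2) \<longrightarrow> (eca 156 ^^ t) ?p i = (eca 156 ^^ t) (patch u x) i) \<and>
      \<not>(eca 156 ^^ t) ?p j1 \<and> (eca 156 ^^ t) ?p (j1+1) \<and> \<not>(eca 156 ^^ t) ?p j2 \<and> (eca 156 ^^ t) ?p (j2+1)" for t
  proof (induction t)
    case 0 then show ?case using agree e1 by simp
  next
    case (Suc t) then show ?case unfolding funpow_Suc_app by (intro seg_step) auto
  qed
  show ?thesis unfolding SInv_def
  proof (intro exI allI)
    fix t
    show "diff_set ((eca 156 ^^ t) ?p) ((eca 156 ^^ t) (patch u x)) \<subseteq> {j1..<j1 + (j2 - j1)}"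
    proof
      fix i assume "i \<in> diff_set ((eca 156 ^^ t) ?p) ((eca 156 ^^ t) (patch u x))"
      then have "\<not> (i \<le> j1+1 \<or> i \<ge> j2)" using inv[of t] unfolding diff_set_def by blast
      then show "i \<in> {j1..<j1 + (j2 - j1)}" by simp
    qed
  qed
qed

lemma persist: "\<not> c j \<Longrightarrow> c (j+1) \<Longrightarrow> \<not> eca 156 c j \<and> eca 156 c (j+1)"
  by (simp add: F156)

lemma front_r: "c r \<Longrightarrow> (\<forall>i>r. \<not> c i) \<Longrightarrow> eca 156 c (r+1) \<and> (\<forall>i>r+1. \<not> eca 156 c i)"
  by (auto simp add: F156)

lemma front_l: "\<not> c L \<Longrightarrow> (\<forall>i<L. c i) \<Longrightarrow> \<not> eca 156 c (L-1) \<and> (\<forall>i<L-1. eca 156 c i)"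
  by (auto simp add: F156)

lemma allF:
  assumes "u \<noteq> []" "True \<notin> set u"
  shows "SInv 156 u x \<longleftrightarrow> True \<notin> set x"
proof -
  have pF: "periodic u = (\<lambda>_. False)"
  proof (rule ext)
    fix i
    have "periodic u i \<in> set u" by (rule periodic_in_set[OF assms(1)])
    with assms(2) show "periodic u i = False" by (cases "periodic u i") auto
  qed
  have xin: "i < length x \<Longrightarrow> x ! i \<in> set x" for i by simp
  show ?thesis
  proof
  have bg: "(eca 156 ^^ t) (\<lambda>_. False) = (\<lambda>_. False)" for t
    by (induction t) (auto simp: F156)
  assume S: "SInv 156 u x"
  show "True \<notin> set x"
  proof
    assume "True \<in> set x"
    then obtain l where l: "l < length x" "x ! l" by (metis in_set_conv_nth)
    let ?c = "patch u x"
    define K where "K = {k. k < length x \<and> x ! k}"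
    have Kf: "finite K" "K \<noteq> {}" using l unfolding K_def by auto
    define r where "r = Max K"
    have rK: "r \<in> K" using Kf unfolding r_def by simp
    have lr: "l \<le> r" using Kf l unfolding r_def K_def by auto
    have cr: "?c (int r)" using rK unfolding K_def patch_def by simp
    have above: "\<forall>i > int r. \<not> ?c i"
    proof (intro allI impI)
      fix i assume "i > int r"
      show "\<not> ?c i"
      proof (cases "i < int (length x)")
        case True
        have "nat i \<notin> K"
        proof
          assume "nat i \<in> K"
          then have "nat i \<le> r" unfolding r_def using Max_ge[OF Kf(1)] by blast
          then show False using \<open>i > int r\<close> by linarith
        qed
        then show ?thesis using True \<open>i > int r\<close> unfolding K_def patch_def by auto
      next
        case False then show ?thesis unfolding patch_def pF by simp
      qed
    qed
    have "\<not> ?c (-1)" unfolding patch_def pF by simp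
    then obtain j where j: "-1 \<le> j" "j < int l" "\<not> ?c j" "?c (j+1)"
      using ivt[of ?c "-1" "int l"] l unfolding patch_def by auto
    have P1: "\<not> (eca 156 ^^ t) ?c j \<and> (eca 156 ^^ t) ?c (j+1)" for t
      by (induction t) (use j persist in auto)
    have P2: "(eca 156 ^^ t) ?c (int r + int t) \<and> (\<forall>i > int r + int t. \<not> (eca 156 ^^ t) ?c i)" for t
    proof (induction t)
      case 0 then show ?case using cr above by simp
    next
      case (Suc t)
      from front_r[of "(eca 156 ^^ t) ?c" "int r + int t"] Suc show ?case
        by (simp add: algebra_simps)
    qed
    from S obtain w where w: "\<forall>t. \<exists>a. diff_set ((eca 156 ^^ t) (periodic u)) ((eca 156 ^^ t) ?c) \<subseteq> {a..<a+w}"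
      unfolding SInv_def by blast
    define t where "t = nat w"
    obtain a where a: "diff_set ((eca 156 ^^ t) (periodic u)) ((eca 156 ^^ t) ?c) \<subseteq> {a..<a+w}"
      using w by blast
    have "j+1 \<in> {a..<a+w}" "int r + int t \<in> {a..<a+w}"
      using a P1[of t] P2[of t] unfolding diff_set_def pF bg by auto
    moreover have "int t \<ge> w" unfolding t_def by simp
    ultimately show False using j lr by auto
  qed
next
  assume nx: "True \<notin> set x"
  have "patch u x = periodic u"
  proof (rule ext)
    fix i
    show "patch u x i = periodic u i"
    proof (cases "0 \<le> i \<and> i < int (length x)")
      case True
      then have "nat i < length x" by linarith
      then have "x ! nat i \<in> set x" by simp
      with nx True show ?thesis unfolding patch_def pF by (cases "x ! nat i") auto
    next
      case False then show ?thesis unfolding patch_def by auto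
    qed
  qed
  then show "SInv 156 u x" unfolding SInv_def diff_set_def by auto
qed
qed

lemma allT:
  assumes "u \<noteq> []" "False \<notin> set u"
  shows "SInv 156 u x \<longleftrightarrow> False \<notin> set x"
proof -
  have pF: "periodic u = (\<lambda>_. True)"
  proof (rule ext)
    fix i
    have "periodic u i \<in> set u" by (rule periodic_in_set[OF assms(1)])
    with assms(2) show "periodic u i = True" by (cases "periodic u i") auto
  qed
  have xin: "i < length x \<Longrightarrow> x ! i \<in> set x" for i by simp
  show ?thesis
  proof
  have bg: "(eca 156 ^^ t) (\<lambda>_. True) = (\<lambda>_. True)" for t
    by (induction t) (auto simp: F156)
  assume S: "SInv 156 u x"
  show "False \<notin> set x"
  proof
    assume "False \<in> set x"
    then obtain l where l: "l < length x" "\<not> x ! l" by (metis in_set_conv_nth)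
    let ?c = "patch u x"
    define K where "K = {k. k < length x \<and> \<not> x ! k}"
    have Kf: "finite K" "K \<noteq> {}" using l unfolding K_def by auto
    define L where "L = Min K"
    have LK: "L \<in> K" using Kf unfolding L_def by simp
    have lL: "L \<le> l" using Kf l unfolding L_def K_def by auto
    have cL: "\<not> ?c (int L)" using LK unfolding K_def patch_def by simp
    have below: "\<forall>i < int L. ?c i"
    proof (intro allI impI)
      fix i assume "i < int L"
      show "?c i"
      proof (cases "i \<ge> 0")
        case True
        have "nat i \<notin> K"
        proof
          assume "nat i \<in> K"
          then have "L \<le> nat i" unfolding L_def using Min_le[OF Kf(1)] by blast
          then show False using \<open>i < int L\<close> True by linarith
        qed
        moreover have "nat i < length x" using LK \<open>i < int L\<close> True unfolding K_def by auto
        ultimately show ?thesis using True unfolding K_def patch_def by auto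
      next
        case False then show ?thesis unfolding patch_def pF by simp
      qed
    qed
    have "?c (int (length x))" unfolding patch_def pF by simp
    then obtain j where j: "int l \<le> j" "\<not> ?c j" "?c (j+1)"
      using ivt[of ?c "int l" "int (length x)"] l unfolding patch_def by auto
    have P1: "\<not> (eca 156 ^^ t) ?c j \<and> (eca 156 ^^ t) ?c (j+1)" for t
      by (induction t) (use j persist in auto)
    have P2: "\<not> (eca 156 ^^ t) ?c (int L - int t) \<and> (\<forall>i < int L - int t. (eca 156 ^^ t) ?c i)" for t
    proof (induction t)
      case 0 then show ?case using cL below by simp
    next
      case (Suc t)
      from front_l[of "(eca 156 ^^ t) ?c" "int L - int t"] Suc show ?case
        by (simp add: algebra_simps)
    qed
    from S obtain w where w: "\<forall>t. \<exists>a. diff_set ((eca 156 ^^ t) (periodic u)) ((eca 156 ^^ t) ?c) \<subseteq> {a..<a+w}"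
      unfolding SInv_def by blast
    define t where "t = nat w"
    obtain a where a: "diff_set ((eca 156 ^^ t) (periodic u)) ((eca 156 ^^ t) ?c) \<subseteq> {a..<a+w}"
      using w by blast
    have "j \<in> {a..<a+w}" "int L - int t \<in> {a..<a+w}"
      using a P1[of t] P2[of t] unfolding diff_set_def pF bg by auto
    moreover have "int t \<ge> w" unfolding t_def by simp
    ultimately show False using j lL by auto
  qed
next
  assume nx: "False \<notin> set x"
  have "patch u x = periodic u"
  proof (rule ext)
    fix i
    show "patch u x i = periodic u i"
    proof (cases "0 \<le> i \<and> i < int (length x)")
      case True
      then have "nat i < length x" by linarith
      then have "x ! nat i \<in> set x" by simp
      with nx True show ?thesis unfolding patch_def pF by (cases "x ! nat i") auto
    next
      case False then show ?thesis unfolding patch_def by auto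
    qed
  qed
  then show "SInv 156 u x" unfolding SInv_def diff_set_def by auto
qed
qed

theorem mainTheorem11:
  fixes u :: "bool list"
  assumes "u \<noteq> []"
  shows "\<exists>C::nat. \<forall>n::nat. D_word n (SInv 156 u) \<le> C"
proof (intro exI allI)
  fix n
  consider "True \<in> set u" "False \<in> set u" | "True \<notin> set u" | "False \<notin> set u" by blast
  then show "D_word n (SInv 156 u) \<le> 2"
  proof cases
    case 1 then show ?thesis
      by (intro cc2[where h = "\<lambda>_ _. True" and A = "\<lambda>_. True" and B = "\<lambda>_. True"])
         (simp add: mixed assms)
  next
    case 2 then show ?thesis
      by (intro cc2[where h = "\<lambda>a b. \<not> (a \<or> b)" and A = "\<lambda>x. True \<in> set x" and B = "\<lambda>x. True \<in> set x"])
         (simp add: allF assms)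
  next
    case 3 then show ?thesis
      by (intro cc2[where h = "\<lambda>a b. \<not> (a \<or> b)" and A = "\<lambda>x. False \<in> set x" and B = "\<lambda>x. False \<in> set x"])
         (simp add: allT assms)
  qed
qed

end
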